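(* If $G$ is a nontrivial graph of order $n$ having a vertex of degree $k$, then $\beta_p(G)\le n-\min\{k,n-1-k\}$.
   Context: All graphs are finite, simple, undirected and connected. For a partition $\Pi=\{S_1,\dots,S_m\}$ of $V(G)$, $r(u|\Pi)=(d(u,S_1),\dots,d(u,S_m))$ with $d(u,S)=\min_{w\in S}d(u,w)$; $\Pi$ is locating if $r(u|\Pi)\ne r(v|\Pi)$ for all distinct $u,v$; $\beta_p(G)$ is the minimum size of a locating partition. *)

theory Defs
  imports Main
begin

definition simple_graph :: "'a set \<Rightarrow> ('a \<Rightarrow> 'a \<Rightarrow> bool) \<Rightarrow> bool" where
  "simple_graph V E \<longleftrightarrow> finite V \<and> (\<forall>u v. E u v \<longrightarrow> u \<in> V \<and> v \<in> V)
     \<and> (\<forall>u v. E u v \<longrightarrow> E v u) \<and> (\<forall>u. \<not> E u u)"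

definition walk :: "'a set \<Rightarrow> ('a \<Rightarrow> 'a \<Rightarrow> bool) \<Rightarrow> 'a list \<Rightarrow> bool" where
  "walk V E p \<longleftrightarrow> p \<noteq> [] \<and> set p \<subseteq> V \<and> (\<forall>i. Suc i < length p \<longrightarrow> E (p ! i) (p ! Suc i))"

definition connected_graph :: "'a set \<Rightarrow> ('a \<Rightarrow> 'a \<Rightarrow> bool) \<Rightarrow> bool" where
  "connected_graph V E \<longleftrightarrow> V \<noteq> {} \<and>
     (\<forall>u\<in>V. \<forall>v\<in>V. \<exists>p. walk V E p \<and> hd p = u \<and> last p = v)"

definition gdist :: "'a set \<Rightarrow> ('a \<Rightarrow> 'a \<Rightarrow> bool) \<Rightarrow> 'a \<Rightarrow> 'a \<Rightarrow> nat" where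
  "gdist V E u v = (LEAST n. \<exists>p. walk V E p \<and> hd p = u \<and> last p = v \<and> length p = Suc n)"

definition set_dist :: "'a set \<Rightarrow> ('a \<Rightarrow> 'a \<Rightarrow> bool) \<Rightarrow> 'a \<Rightarrow> 'a set \<Rightarrow> nat" where
  "set_dist V E u S = (LEAST d. \<exists>w\<in>S. d = gdist V E u w)"

definition degree :: "'a set \<Rightarrow> ('a \<Rightarrow> 'a \<Rightarrow> bool) \<Rightarrow> 'a \<Rightarrow> nat" where
  "degree V E v = card {w \<in> V. E v w}"

definition is_partition :: "'a set \<Rightarrow> 'a set set \<Rightarrow> bool" where
  "is_partition V P \<longleftrightarrow> (\<forall>S\<in>P. S \<noteq> {}) \<and> \<Union>P = V \<and>
     (\<forall>S\<in>P. \<forall>T\<in>P. S \<noteq> T \<longrightarrow> S \<inter> T = {})"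

text \<open>Locating: distinct vertices differ in their distance to some block
  (equivalently, the representation vectors r(u|P) w.r.t. any ordering of P differ).\<close>
definition locating_partition :: "'a set \<Rightarrow> ('a \<Rightarrow> 'a \<Rightarrow> bool) \<Rightarrow> 'a set set \<Rightarrow> bool" where
  "locating_partition V E P \<longleftrightarrow> is_partition V P \<and>
     (\<forall>u\<in>V. \<forall>v\<in>V. u \<noteq> v \<longrightarrow> (\<exists>S\<in>P. set_dist V E u S \<noteq> set_dist V E v S))"

definition partition_dimension :: "'a set \<Rightarrow> ('a \<Rightarrow> 'a \<Rightarrow> bool) \<Rightarrow> nat" where
  "partition_dimension V E = (LEAST m. \<exists>P. locating_partition V E P \<and> card P = m)"

end

theory Submission
  imports Defs
begin

lemma gdist_ex:
  assumes "connected_graph V E" "x \<in> V" "y \<in> V"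
  shows "\<exists>p. walk V E p \<and> hd p = x \<and> last p = y \<and> length p = Suc (gdist V E x y)"
proof -
  obtain p where p: "walk V E p" "hd p = x" "last p = y"
    using assms unfolding connected_graph_def by blast
  then have "p \<noteq> []" by (simp add: walk_def)
  then have "\<exists>n. \<exists>p. walk V E p \<and> hd p = x \<and> last p = y \<and> length p = Suc n"
    using p by (intro exI[of _ "length p - 1"] exI[of _ p]) auto
  then show ?thesis unfolding gdist_def by (rule LeastI_ex)
qed

lemma gdist_self: "x \<in> V \<Longrightarrow> gdist V E x x = 0"
  unfolding gdist_def
  by (rule Least_eq_0, rule exI[of _ "[x]"]) (simp add: walk_def)

lemma gdist_pos:
  assumes "connected_graph V E" "x \<in> V" "y \<in> V" "x \<noteq> y"
  shows "gdist V E x y \<noteq> 0"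
proof
  assume "gdist V E x y = 0"
  with gdist_ex[OF assms(1-3)] obtain p where "hd p = x" "last p = y" "length p = 1" by auto
  then show False using assms(4) by (cases p) auto
qed

lemma gdist_adj:
  assumes "connected_graph V E" "x \<in> V" "y \<in> V" "E x y" "x \<noteq> y"
  shows "gdist V E x y = 1"
proof -
  have "gdist V E x y \<le> 1" unfolding gdist_def
    by (rule Least_le, rule exI[of _ "[x,y]"]) (use assms in \<open>auto simp: walk_def nth_Cons split: nat.splits\<close>)
  with gdist_pos[OF assms(1,2,3,5)] show ?thesis by simp
qed

lemma gdist_nonadj:
  assumes "connected_graph V E" "x \<in> V" "y \<in> V" "\<not> E x y"
  shows "gdist V E x y \<noteq> 1"
proof
  assume "gdist V E x y = 1"
  with gdist_ex[OF assms(1-3)] obtain p where p: "walk V E p" "hd p = x" "last p = y" "length p = 2" by auto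
  then obtain a b where "p = [a,b]"
    by (cases p; cases "tl p") auto
  with p have "E x y" by (auto simp: walk_def)
  with assms(4) show False by simp
qed

lemma set_dist_in:
  assumes "x \<in> S" "x \<in> V"
  shows "set_dist V E x S = 0"
  unfolding set_dist_def
  by (rule Least_eq_0) (use assms gdist_self in \<open>metis\<close>)

lemma set_dist_notin:
  assumes "connected_graph V E" "x \<in> V" "S \<subseteq> V" "x \<notin> S" "S \<noteq> {}"
  shows "set_dist V E x S \<noteq> 0"
proof -
  obtain w where "w \<in> S" using assms by auto
  then have "\<exists>d. \<exists>w\<in>S. d = gdist V E x w" by auto
  then have "\<exists>w\<in>S. set_dist V E x S = gdist V E x w" unfolding set_dist_def by (rule LeastI_ex)
  then obtain w where "w \<in> S" "set_dist V E x S = gdist V E x w" by blast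
  moreover from \<open>w \<in> S\<close> assms(3,4) have "w \<in> V" "x \<noteq> w" by auto
  ultimately show ?thesis using gdist_pos[OF assms(1,2), of w] by simp
qed

lemma set_dist_single: "set_dist V E x {w} = gdist V E x w"
  unfolding set_dist_def by (simp add: Least_equality)


theorem lemma10:
  fixes V :: "'a set" and E :: "'a \<Rightarrow> 'a \<Rightarrow> bool" and v :: 'a and n k :: nat
  assumes "simple_graph V E" and "connected_graph V E"
    and "card V = n" and "n \<ge> 2"
    and "v \<in> V" and "degree V E v = k"
  shows "partition_dimension V E \<le> n - min k (n - 1 - k)"
proof -
  note G = assms(1)[unfolded simple_graph_def]
  have finV: "finite V" using G by blast
  have sym: "\<And>a b. E a b \<Longrightarrow> E b a" and irr: "\<And>a. \<not> E a a" using G by blast+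
  define N where "N = {w \<in> V. E v w}"
  define M where "M = V - insert v N"
  have cN: "card N = k" using assms(6) by (simp add: degree_def N_def)
  have NV: "insert v N \<subseteq> V" using assms(5) by (auto simp: N_def)
  have vN: "v \<notin> N" using irr by (auto simp: N_def)
  have finN: "finite N" using finite_subset[OF _ finV] NV by simp
  have cM: "card M = n - 1 - k"
    unfolding M_def using card_Diff_subset[OF finite_subset[OF NV finV] NV] assms(3) cN vN finN by simp
  define m where "m = min k (n - 1 - k)"
  obtain U where U: "U \<subseteq> N" "card U = m" "finite U"
    using obtain_subset_with_card_n[of m N] cN m_def by auto
  obtain W where W: "W \<subseteq> M" "card W = m" "finite W"
    using obtain_subset_with_card_n[of m M] cM m_def by auto
  obtain f where f: "bij_betw f U W" using finite_same_card_bij[OF U(3) W(3)] U W by auto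
  have injf: "inj_on f U" and fU: "f ` U = W" using f by (auto simp: bij_betw_def)
  have UW: "U \<inter> W = {}" using U W by (auto simp: M_def)
  have UV: "U \<subseteq> V" "W \<subseteq> V" using U W NV by (auto simp: M_def)
  have vUW: "v \<notin> U" "v \<notin> W" using U W vN by (auto simp: M_def)
  have Eu: "\<And>u. u \<in> U \<Longrightarrow> E u v" using U sym by (auto simp: N_def)
  have nEw: "\<And>w. w \<in> W \<Longrightarrow> \<not> E w v" using W sym by (auto simp: M_def N_def)
  define P where "P = (\<lambda>u. {u, f u}) ` U \<union> (\<lambda>x. {x}) ` (V - U - W)"
  have cUW: "card (U \<union> W) = 2 * m" using card_Un_disjoint[OF U(3) W(3) UW] U W by simp
  have cR: "card (V - U - W) = n - 2 * m"
  proof -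
    have "V - U - W = V - (U \<union> W)" by auto
    then show ?thesis using card_Diff_subset[OF finite_subset[OF _ finV] ] UV cUW assms(3)
      by (metis Un_subset_iff finite_Un U(3) W(3))
  qed
  have m2: "2 * m \<le> n" using m_def assms(4) by linarith
  have cardP: "card P \<le> n - m"
  proof -
    have "card P \<le> card ((\<lambda>u. {u, f u}) ` U) + card ((\<lambda>x. {x}) ` (V - U - W))"
      unfolding P_def by (rule card_Un_le)
    also have "\<dots> \<le> card U + card (V - U - W)"
      by (intro add_mono card_image_le) (use U finV in auto)
    finally show ?thesis using U cR m2 by simp
  qed
  have PV: "\<And>S. S \<in> P \<Longrightarrow> S \<subseteq> V \<and> S \<noteq> {}" using UV fU unfolding P_def by auto
  have vP: "{v} \<in> P" using assms(5) vUW unfolding P_def by auto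
  have diff: "\<exists>S\<in>P. set_dist V E x S \<noteq> set_dist V E y S"
    if "S \<in> P" "x \<in> S" "y \<notin> S" "x \<in> V" "y \<in> V" for S x y
    using that set_dist_in[of x S V E] set_dist_notin[OF assms(2), of y S] PV[OF that(1)] by auto
  have pair: "set_dist V E u {v} \<noteq> set_dist V E (f u) {v}" if "u \<in> U" for u
  proof -
    have "f u \<in> W" using that fU by auto
    then have "gdist V E (f u) v \<noteq> 1" using gdist_nonadj[OF assms(2) _ assms(5)] nEw UV by auto
    moreover have "gdist V E u v = 1" using gdist_adj[OF assms(2) _ assms(5) Eu[OF that]] that UV vUW by auto
    ultimately show ?thesis by (simp add: set_dist_single)
  qed
  have part: "is_partition V P"
  proof -
    have "\<Union>P = V" using UV fU unfolding P_def by auto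
    moreover have "\<forall>S\<in>P. \<forall>T\<in>P. S \<noteq> T \<longrightarrow> S \<inter> T = {}"
      unfolding P_def using injf fU UW by (auto simp: inj_on_def)
    ultimately show ?thesis using PV unfolding is_partition_def by blast
  qed
  have loc: "locating_partition V E P"
    unfolding locating_partition_def
  proof (intro conjI part ballI impI)
    fix x y assume xy: "x \<in> V" "y \<in> V" "x \<noteq> y"
    consider "x \<in> V - U - W" | "x \<in> U" | "x \<in> W" using xy(1) by blast
    then show "\<exists>S\<in>P. set_dist V E x S \<noteq> set_dist V E y S"
    proof cases
      case 1
      then have "{x} \<in> P" unfolding P_def by auto
      then show ?thesis using diff[of "{x}" x y] xy by auto
    next
      case 2
      then have SP: "{x, f x} \<in> P" unfolding P_def by auto
      show ?thesis
      proof (cases "y = f x")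
        case True then show ?thesis using pair[OF 2] vP by auto
      next
        case False then show ?thesis using diff[OF SP, of x y] xy by auto
      qed
    next
      case 3
      then obtain u where u: "u \<in> U" "x = f u" using fU by auto
      then have SP: "{u, x} \<in> P" unfolding P_def by auto
      show ?thesis
      proof (cases "y = u")
        case True then show ?thesis using pair[OF u(1)] vP u by metis
      next
        case False then show ?thesis using diff[OF SP, of x y] xy by auto
      qed
    qed
  qed
  have "partition_dimension V E \<le> card P"
    unfolding partition_dimension_def by (rule Least_le) (use loc in blast)
  then show ?thesis using cardP m_def by simp
qed

end
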